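(* Let $0<\mathbb{P}_l<\mathbb{P}_u$ and $0<\mathbb{S}_l<\mathbb{S}_u$, and let $P_t$ be a positive integrable random variable (the pool price at time $t$ under the risk-neutral pricing measure, with zero interest rate). For $K>0$ let $\mathbf{C}(K)=\mathbb{E}[(P_t-K)^+]$ and $\mathbf{P}(K)=\mathbb{E}[(K-P_t)^+]$ be the European call and put prices with maturity $t$ and strike $K$. With $\mathrm{UIL}^{\mathtt{R}}$ and $\mathrm{UIL}^{\mathtt{L}}$ as defined in the context, $$\mathbb{E}[\mathrm{UIL}^{\mathtt{R}}]=-\tfrac12\int_{\mathbb{P}_l}^{\mathbb{P}_u}K^{-3/2}\mathbf{C}(K)\,\mathrm{d}K,\qquad \mathbb{E}[\mathrm{UIL}^{\mathtt{L}}]=-\tfrac12\int_{\mathbb{S}_l}^{\mathbb{S}_u}K^{-3/2}\mathbf{P}(K)\,\mathrm{d}K.$$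
   Context: Unit impermanent losses per liquidity for the exit price $P_t$: $\mathrm{UIL}^{\mathtt{R}}=\big(2\sqrt{P_t}-\tfrac{P_t}{\sqrt{\mathbb{P}_l}}-\sqrt{\mathbb{P}_l}\big)\mathbf{1}_{\{\mathbb{P}_l\le P_t\le \mathbb{P}_u\}}+\big(\sqrt{\mathbb{P}_u}-\sqrt{\mathbb{P}_l}-(\tfrac{1}{\sqrt{\mathbb{P}_l}}-\tfrac{1}{\sqrt{\mathbb{P}_u}})P_t\big)\mathbf{1}_{\{P_t\ge \mathbb{P}_u\}}$ (liquidity supplied on the interval $[\mathbb{P}_l,\mathbb{P}_u]$ to the right of the initial price), and $\mathrm{UIL}^{\mathtt{L}}=\big(2\sqrt{P_t}-\tfrac{P_t}{\sqrt{\mathbb{S}_u}}-\sqrt{\mathbb{S}_u}\big)\mathbf{1}_{\{\mathbb{S}_l\le P_t\le \mathbb{S}_u\}}+\big((\tfrac{1}{\sqrt{\mathbb{S}_l}}-\tfrac{1}{\sqrt{\mathbb{S}_u}})P_t-\sqrt{\mathbb{S}_u}+\sqrt{\mathbb{S}_l}\big)\mathbf{1}_{\{P_t\le \mathbb{S}_l\}}$ (liquidity supplied on $[\mathbb{S}_l,\mathbb{S}_u]$ to the left of the initial price). Here $y^+=\max(y,0)$. *)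

theory Defs
  imports "HOL-Probability.Probability"
begin

text \<open>Unit impermanent loss, liquidity on [Pl, Pu] to the right of the initial price.
  Written piecewise; the two branches agree at p = Pu.\<close>
definition UIL_R :: "real \<Rightarrow> real \<Rightarrow> real \<Rightarrow> real" where
  "UIL_R Pl Pu p =
     (if Pl \<le> p \<and> p \<le> Pu then 2 * sqrt p - p / sqrt Pl - sqrt Pl
      else if p \<ge> Pu then sqrt Pu - sqrt Pl - (1 / sqrt Pl - 1 / sqrt Pu) * p
      else 0)"

definition UIL_L :: "real \<Rightarrow> real \<Rightarrow> real \<Rightarrow> real" where
  "UIL_L Sl Su p =
     (if Sl \<le> p \<and> p \<le> Su then 2 * sqrt p - p / sqrt Su - sqrt Su
      else if p \<le> Sl then (1 / sqrt Sl - 1 / sqrt Su) * p - sqrt Su + sqrt Sl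
      else 0)"

definition call_price :: "'a measure \<Rightarrow> ('a \<Rightarrow> real) \<Rightarrow> real \<Rightarrow> real" where
  "call_price M P K = (\<integral>x. max (P x - K) 0 \<partial>M)"

definition put_price :: "'a measure \<Rightarrow> ('a \<Rightarrow> real) \<Rightarrow> real \<Rightarrow> real" where
  "put_price M P K = (\<integral>x. max (K - P x) 0 \<partial>M)"

end

theory Submission
  imports Defs
begin
lemma pw: "(K::real) > 0 \<Longrightarrow> K powr (-3/2) = 1/(K * sqrt K)"
proof -
  assume K: "K > 0"
  have "K * sqrt K = K powr 1 * K powr (1/2)" using K by (simp only: powr_half_sqrt powr_one)
  also have "\<dots> = K powr (1 + 1/2)" by (rule powr_add[symmetric])
  also have "(1 + 1/2::real) = 3/2" by simp
  finally have "K powr (3/2) = K * sqrt K" by simp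
  then show ?thesis by (metis powr_minus inverse_eq_divide minus_divide_left)
qed
lemma deriv: assumes "(K::real) > 0"
  shows "((\<lambda>K. -2 * p/sqrt K - 2 * sqrt K) has_real_derivative 1/(K * sqrt K) * (p - K)) (at K)"
proof -
  have "((\<lambda>K. -2 * p/sqrt K - 2 * sqrt K) has_real_derivative
     (- (-2 * p * (inverse (sqrt K) / 2)) / (sqrt K * sqrt K) - 2 * (inverse (sqrt K) / 2))) (at K)"
    using assms by (auto intro!: derivative_eq_intros)
  moreover have "(- (-2 * p * (inverse (sqrt K) / 2)) / (sqrt K * sqrt K) - 2 * (inverse (sqrt K) / 2)) = 1/(K * sqrt K) * (p - K)"
    using assms by (simp add: field_simps)
  ultimately show ?thesis by simp
qed
lemma ftc: assumes "0 < a" "a \<le> c"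
  shows "((\<lambda>K. 1/(K * sqrt K) * (p - K)) has_integral
     ((-2 * p/sqrt c - 2 * sqrt c) - (-2 * p/sqrt a - 2 * sqrt a))) {a..c}"
proof (rule fundamental_theorem_of_calculus[OF assms(2)])
  fix x assume "x \<in> {a..c}"
  then have "x > 0" using assms by auto
  from deriv[OF this, of p] show "((\<lambda>K. -2 * p/sqrt K - 2 * sqrt K) has_vector_derivative 1/(x * sqrt x) * (p - x)) (at x within {a..c})"
    by (simp add: has_real_derivative_iff_has_vector_derivative[symmetric] has_field_derivative_at_within)
qed
lemma ftc2: assumes "0 < a" "a \<le> c"
  shows "((\<lambda>K. 1/(K * sqrt K) * (K - p)) has_integral
     ((2 * p/sqrt c + 2 * sqrt c) - (2 * p/sqrt a + 2 * sqrt a))) {a..c}"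
proof -
  have hi: "((\<lambda>K. - (1/(K * sqrt K) * (p - K))) has_integral
     - ((-2 * p/sqrt c - 2 * sqrt c) - (-2 * p/sqrt a - 2 * sqrt a))) {a..c}"
    by (rule has_integral_neg[OF ftc[OF assms]])
  have e: "\<And>K. - (1/(K * sqrt K) * (p - K)) = 1/(K * sqrt K) * (K - p)"
    by (simp add: right_diff_distrib)
  have v: "- ((-2 * p/sqrt c - 2 * sqrt c) - (-2 * p/sqrt a - 2 * sqrt a)) = ((2 * p/sqrt c + 2 * sqrt c) - (2 * p/sqrt a + 2 * sqrt a))"
    by simp
  show ?thesis using hi unfolding e v .
qed

lemma two_div_sqrt: "0 \<le> (p::real) \<Longrightarrow> 2 * p / sqrt p = 2 * sqrt p"
  by (metis times_divide_eq_right real_div_sqrt)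

lemma two_div_sqrt2: "0 \<le> (p::real) \<Longrightarrow> p * 2 / sqrt p = sqrt p * 2"
  by (metis mult.commute two_div_sqrt)

lemma innerR: assumes "0 < a" "a < b"
  shows "(LBINT K:{a..b}. 1/(K * sqrt K) * max (p - K) 0) = -2 * UIL_R a b p"
proof -
  let ?f = "\<lambda>K::real. 1/(K * sqrt K) * max (p - K) 0"
  have si: "set_integrable lborel {a..b} ?f"
    by (rule borel_integrable_atLeastAtMost') (use assms in \<open>intro continuous_intros; auto\<close>)
  have eq: "(LBINT K:{a..b}. ?f K) = integral {a..b} ?f"
    by (rule set_borel_integral_eq_integral(2)[OF si])
  have "(?f has_integral -2 * UIL_R a b p) {a..b}"
  proof (cases "p \<le> a")
    case True
    have u: "UIL_R a b p = 0"
      using True assms by (auto simp: UIL_R_def real_div_sqrt two_div_sqrt)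
    have "((\<lambda>K. 0::real) has_integral 0) {a..b}" by simp
    then show ?thesis unfolding u
      by (subst has_integral_cong[where g="\<lambda>K. 0"]) (use True in auto)
  next
    case False
    show ?thesis
    proof (cases "p < b")
      case True
      have i0: "((\<lambda>K. 1/(K * sqrt K) * (p - K)) has_integral ((-2 * p/sqrt p - 2 * sqrt p) - (-2 * p/sqrt a - 2 * sqrt a))) {a..p}"
        by (rule ftc) (use False assms in auto)
      have i1: "(?f has_integral ((-2 * p/sqrt p - 2 * sqrt p) - (-2 * p/sqrt a - 2 * sqrt a))) {a..p}"
        by (rule has_integral_cong[THEN iffD2, OF _ i0]) auto
      have i2: "(?f has_integral 0) {p..b}"
        by (subst has_integral_cong[where g="\<lambda>K. 0"]) auto
      have "(?f has_integral (((-2 * p/sqrt p - 2 * sqrt p) - (-2 * p/sqrt a - 2 * sqrt a)) + 0)) {a..b}"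
        by (rule has_integral_combine[OF _ _ i1 i2]) (use False True in auto)
      moreover have "((-2 * p/sqrt p - 2 * sqrt p) - (-2 * p/sqrt a - 2 * sqrt a)) + 0 = -2 * UIL_R a b p"
        using False True assms by (auto simp: UIL_R_def real_div_sqrt two_div_sqrt)
      ultimately show ?thesis by simp
    next
      case F2: False
      have i0: "((\<lambda>K. 1/(K * sqrt K) * (p - K)) has_integral ((-2 * p/sqrt b - 2 * sqrt b) - (-2 * p/sqrt a - 2 * sqrt a))) {a..b}"
        by (rule ftc) (use assms in auto)
      have i1: "(?f has_integral ((-2 * p/sqrt b - 2 * sqrt b) - (-2 * p/sqrt a - 2 * sqrt a))) {a..b}"
        by (rule has_integral_cong[THEN iffD2, OF _ i0]) (use F2 in auto)
      moreover have "((-2 * p/sqrt b - 2 * sqrt b) - (-2 * p/sqrt a - 2 * sqrt a)) = -2 * UIL_R a b p"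
        using False F2 assms by (auto simp: UIL_R_def real_div_sqrt two_div_sqrt algebra_simps two_div_sqrt2)
      ultimately show ?thesis by simp
    qed
  qed
  then show ?thesis using eq by (simp add: integral_unique)
qed

lemma innerL: assumes "0 < a" "a < b"
  shows "(LBINT K:{a..b}. 1/(K * sqrt K) * max (K - p) 0) = -2 * UIL_L a b p"
proof -
  let ?f = "\<lambda>K::real. 1/(K * sqrt K) * max (K - p) 0"
  have si: "set_integrable lborel {a..b} ?f"
    by (rule borel_integrable_atLeastAtMost') (use assms in \<open>intro continuous_intros; auto\<close>)
  have eq: "(LBINT K:{a..b}. ?f K) = integral {a..b} ?f"
    by (rule set_borel_integral_eq_integral(2)[OF si])
  have "(?f has_integral -2 * UIL_L a b p) {a..b}"
  proof (cases "p \<ge> b")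
    case True
    have u: "UIL_L a b p = 0"
      using True assms by (auto simp: UIL_L_def real_div_sqrt two_div_sqrt)
    have "((\<lambda>K. 0::real) has_integral 0) {a..b}" by simp
    then show ?thesis unfolding u
      by (subst has_integral_cong[where g="\<lambda>K. 0"]) (use True in auto)
  next
    case False
    show ?thesis
    proof (cases "p > a")
      case True
      have i0: "((\<lambda>K. 1/(K * sqrt K) * (K - p)) has_integral ((2 * p/sqrt b + 2 * sqrt b) - (2 * p/sqrt p + 2 * sqrt p))) {p..b}"
        by (rule ftc2) (use False True assms in auto)
      have i2: "(?f has_integral ((2 * p/sqrt b + 2 * sqrt b) - (2 * p/sqrt p + 2 * sqrt p))) {p..b}"
        by (rule has_integral_cong[THEN iffD2, OF _ i0]) auto
      have i1: "(?f has_integral 0) {a..p}"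
        by (subst has_integral_cong[where g="\<lambda>K. 0"]) auto
      have "(?f has_integral (0 + ((2 * p/sqrt b + 2 * sqrt b) - (2 * p/sqrt p + 2 * sqrt p)))) {a..b}"
        by (rule has_integral_combine[OF _ _ i1 i2]) (use False True in auto)
      moreover have "0 + ((2 * p/sqrt b + 2 * sqrt b) - (2 * p/sqrt p + 2 * sqrt p)) = -2 * UIL_L a b p"
        using False True assms by (auto simp: UIL_L_def real_div_sqrt two_div_sqrt)
      ultimately show ?thesis by simp
    next
      case F2: False
      have i0: "((\<lambda>K. 1/(K * sqrt K) * (K - p)) has_integral ((2 * p/sqrt b + 2 * sqrt b) - (2 * p/sqrt a + 2 * sqrt a))) {a..b}"
        by (rule ftc2) (use assms in auto)
      have i1: "(?f has_integral ((2 * p/sqrt b + 2 * sqrt b) - (2 * p/sqrt a + 2 * sqrt a))) {a..b}"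
        by (rule has_integral_cong[THEN iffD2, OF _ i0]) (use F2 in auto)
      moreover have "((2 * p/sqrt b + 2 * sqrt b) - (2 * p/sqrt a + 2 * sqrt a)) = -2 * UIL_L a b p"
        using False F2 assms by (auto simp: UIL_L_def real_div_sqrt two_div_sqrt algebra_simps two_div_sqrt2)
      ultimately show ?thesis by simp
    qed
  qed
  then show ?thesis using eq by (simp add: integral_unique)
qed

lemma fub:
  fixes g :: "real \<Rightarrow> real \<Rightarrow> real" and M :: "'a measure"
  assumes M: "prob_space M" and int: "integrable M P" and a: "0 < a" "a < b"
   and gm: "(\<lambda>z. g (P (fst z)) (snd z)) \<in> borel_measurable (M \<Otimes>\<^sub>M lborel)"
   and gb: "\<And>p K. a \<le> K \<Longrightarrow> K \<le> b \<Longrightarrow> \<bar>g p K\<bar> \<le> \<bar>p\<bar> + b"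
   and gc: "\<And>p. continuous_on {a..b} (g p)"
  shows "(LBINT K:{a..b}. 1/(K * sqrt K) * (\<integral>x. g (P x) K \<partial>M))
       = (\<integral>x. (LBINT K:{a..b}. 1/(K * sqrt K) * g (P x) K) \<partial>M)"
proof -
  interpret prob_space M by (rule M)
  interpret pair_sigma_finite M lborel
    by (intro pair_sigma_finite.intro sigma_finite_measure_axioms lborel.sigma_finite_measure_axioms)
  define h where "h x K = indicator {a..b} K * (1/(K * sqrt K) * g (P x) K)" for x K
  have Pm[measurable]: "P \<in> borel_measurable M" using int by auto
  have hcase: "case_prod h = (\<lambda>z. indicator {a..b} (snd z) * (1/(snd z * sqrt (snd z)) * g (P (fst z)) (snd z)))"
    by (auto simp: h_def fun_eq_iff)
  have hm: "case_prod h \<in> borel_measurable (M \<Otimes>\<^sub>M lborel)"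
    unfolding hcase using gm by measurable
  have cont: "continuous_on {a..b} (\<lambda>K. 1/(K * sqrt K) * g p K)" for p
    using a by (intro continuous_intros gc) auto
  have hi: "integrable lborel (h x)" for x
    using borel_integrable_atLeastAtMost'[OF cont[of "P x"]]
    unfolding set_integrable_def h_def by simp
  define C where "C x = 1/(a * sqrt a) * (\<bar>P x\<bar> + b)" for x
  have bnd: "norm (h x K) \<le> indicator {a..b} K * C x" for x K
  proof (cases "K \<in> {a..b}")
    case True
    then have K: "a \<le> K" "K \<le> b" by auto
    have "1/(K * sqrt K) \<le> 1/(a * sqrt a)"
      using a K by (intro divide_left_mono mult_mono real_sqrt_le_mono mult_pos_pos) auto
    moreover have "0 \<le> 1/(K * sqrt K)" using a K by auto
    ultimately have "1/(K * sqrt K) * \<bar>g (P x) K\<bar> \<le> 1/(a * sqrt a) * (\<bar>P x\<bar> + b)"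
      using gb[OF K] a by (intro mult_mono) auto
    then show ?thesis using True a K by (simp add: h_def C_def abs_mult)
  next
    case False
    then show ?thesis by (simp add: h_def)
  qed
  have ci: "integrable lborel (\<lambda>K. indicator {a..b} K * C x)" for x
    using borel_integrable_atLeastAtMost'[OF continuous_on_const[of "{a..b}" "C x"]]
    unfolding set_integrable_def by simp
  have ibnd: "(\<integral>K. norm (h x K) \<partial>lborel) \<le> (b - a) * C x" for x
  proof -
    have "(\<integral>K. norm (h x K) \<partial>lborel) \<le> (\<integral>K. indicator {a..b} K * C x \<partial>lborel)"
      by (rule integral_mono[OF _ ci bnd]) (use hi in auto)
    also have "\<dots> = (b - a) * C x" using a by simp
    finally show ?thesis .
  qed
  have Ci: "integrable M (\<lambda>x. (b - a) * C x)"
    unfolding C_def using int by (intro integrable_mult_right integrable_add integrable_abs) auto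
  have i1: "integrable M (\<lambda>x. \<integral>K. norm (h x K) \<partial>lborel)"
  proof (rule Bochner_Integration.integrable_bound[OF Ci])
    show "(\<lambda>x. \<integral>K. norm (h x K) \<partial>lborel) \<in> borel_measurable M"
      using hm by measurable
    show "AE x in M. norm (\<integral>K. norm (h x K) \<partial>lborel) \<le> norm ((b - a) * C x)"
    proof (intro AE_I2)
      fix x
      have "0 \<le> (\<integral>K. norm (h x K) \<partial>lborel)" by simp
      moreover have "0 \<le> (b - a) * C x" using a by (simp add: C_def)
      ultimately show "norm (\<integral>K. norm (h x K) \<partial>lborel) \<le> norm ((b - a) * C x)"
        using ibnd[of x] by simp
    qed
  qed
  have hint: "integrable (M \<Otimes>\<^sub>M lborel) (case_prod h)"
    by (rule Fubini_integrable[OF hm]) (use i1 hi in auto)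
  have F: "(\<integral>K. (\<integral>x. h x K \<partial>M) \<partial>lborel) = (\<integral>x. (\<integral>K. h x K \<partial>lborel) \<partial>M)"
    by (rule Fubini_integral[OF hint])
  have L: "(LBINT K:{a..b}. 1/(K * sqrt K) * (\<integral>x. g (P x) K \<partial>M)) = (\<integral>K. (\<integral>x. h x K \<partial>M) \<partial>lborel)"
    unfolding set_lebesgue_integral_def h_def
    by (intro Bochner_Integration.integral_cong refl) (simp add: mult.assoc)
  have R: "(\<integral>x. (LBINT K:{a..b}. 1/(K * sqrt K) * g (P x) K) \<partial>M) = (\<integral>x. (\<integral>K. h x K \<partial>lborel) \<partial>M)"
    unfolding set_lebesgue_integral_def h_def by simp
  show ?thesis using L R F by simp
qed

theorem proposition2:
  fixes M :: "'a measure" and P :: "'a \<Rightarrow> real" and Pl Pu Sl Su :: real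
  assumes "prob_space M"
    and "integrable M P"
    and "\<forall>x\<in>space M. 0 < P x"
    and "0 < Pl" and "Pl < Pu"
    and "0 < Sl" and "Sl < Su"
  shows "(\<integral>x. UIL_R Pl Pu (P x) \<partial>M)
           = - 1/2 * (LBINT K:{Pl..Pu}. K powr (-3/2) * call_price M P K)
         \<and> (\<integral>x. UIL_L Sl Su (P x) \<partial>M)
           = - 1/2 * (LBINT K:{Sl..Su}. K powr (-3/2) * put_price M P K)"
proof
  have Pm[measurable]: "P \<in> borel_measurable M" using assms(2) by auto
  have c1: "(LBINT K:{Pl..Pu}. K powr (-3/2) * call_price M P K)
     = (LBINT K:{Pl..Pu}. 1/(K * sqrt K) * (\<integral>x. max (P x - K) 0 \<partial>M))"
  proof (rule set_lebesgue_integral_cong, simp, intro allI impI)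
    fix K assume "K \<in> {Pl..Pu}"
    then have "0 < K" using assms by auto
    then show "K powr (-3/2) * call_price M P K = 1/(K * sqrt K) * (\<integral>x. max (P x - K) 0 \<partial>M)"
      by (simp only: pw call_price_def)
  qed
  have c2: "(LBINT K:{Pl..Pu}. 1/(K * sqrt K) * (\<integral>x. max (P x - K) 0 \<partial>M))
     = (\<integral>x. (LBINT K:{Pl..Pu}. 1/(K * sqrt K) * max (P x - K) 0) \<partial>M)"
    by (rule fub[where g="\<lambda>p K. max (p - K) 0", OF assms(1,2,4,5)])
       (use assms in \<open>measurable, auto intro!: continuous_intros\<close>)
  have c3: "(\<integral>x. (LBINT K:{Pl..Pu}. 1/(K * sqrt K) * max (P x - K) 0) \<partial>M)
     = (\<integral>x. -2 * UIL_R Pl Pu (P x) \<partial>M)"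
    using innerR[OF assms(4,5)] by simp
  show "(\<integral>x. UIL_R Pl Pu (P x) \<partial>M)
           = - 1/2 * (LBINT K:{Pl..Pu}. K powr (-3/2) * call_price M P K)"
    unfolding c1 c2 c3 by simp
next
  have Pm[measurable]: "P \<in> borel_measurable M" using assms(2) by auto
  have c1: "(LBINT K:{Sl..Su}. K powr (-3/2) * put_price M P K)
     = (LBINT K:{Sl..Su}. 1/(K * sqrt K) * (\<integral>x. max (K - P x) 0 \<partial>M))"
  proof (rule set_lebesgue_integral_cong, simp, intro allI impI)
    fix K assume "K \<in> {Sl..Su}"
    then have "0 < K" using assms by auto
    then show "K powr (-3/2) * put_price M P K = 1/(K * sqrt K) * (\<integral>x. max (K - P x) 0 \<partial>M)"
      by (simp only: pw put_price_def)
  qed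
  have c2: "(LBINT K:{Sl..Su}. 1/(K * sqrt K) * (\<integral>x. max (K - P x) 0 \<partial>M))
     = (\<integral>x. (LBINT K:{Sl..Su}. 1/(K * sqrt K) * max (K - P x) 0) \<partial>M)"
    by (rule fub[where g="\<lambda>p K. max (K - p) 0", OF assms(1,2,6,7)])
       (use assms in \<open>measurable, auto intro!: continuous_intros\<close>)
  have c3: "(\<integral>x. (LBINT K:{Sl..Su}. 1/(K * sqrt K) * max (K - P x) 0) \<partial>M)
     = (\<integral>x. -2 * UIL_L Sl Su (P x) \<partial>M)"
    using innerL[OF assms(6,7)] by simp
  show "(\<integral>x. UIL_L Sl Su (P x) \<partial>M)
           = - 1/2 * (LBINT K:{Sl..Su}. K powr (-3/2) * put_price M P K)"
    unfolding c1 c2 c3 by simp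
qed
end
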